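(* Let $d\le 4$ and let $A=(A_1,\dots,A_d)$ have a palindromic Ising model distribution on $\{0,1\}^d$. Then for every nonempty subset $M\subseteq\{1,\dots,d\}$, the marginal distribution of $(A_v)_{v\in M}$ is again a palindromic Ising model.
   Context: A distribution $p$ on $\{0,1\}^k$ with $p(a)>0$ for all $a$ is palindromic if $p(a)=p(\sim a)$ for all $a$, where $\sim a$ is the complement of $a$. Its log-linear interactions (effect coding) are $\lambda_b=2^{-k}\sum_{a}(-1)^{a\cdot b}\log p(a)$ for $b\in\{0,1\}^k$. It is an Ising model if $\lambda_b=0$ for all $b$ with $|b|=\sum_v b_v\ge3$, and a palindromic Ising model if it is both an Ising model and palindromic (equivalently an Ising model with uniform margins). *)

theory Defs
  imports Complex_Main
begin

text \<open>A binary vector a in {0,1}^V (V a finite index set) is encoded by the set of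
  coordinates equal to 1, i.e. a subset of V. The complement of a is V - a and
  the dot product a.b is card (a \<inter> b).\<close>

definition pos_dist :: "nat set \<Rightarrow> (nat set \<Rightarrow> real) \<Rightarrow> bool" where
  "pos_dist V p \<longleftrightarrow> (\<forall>a\<subseteq>V. p a > 0) \<and> (\<Sum>a\<in>Pow V. p a) = 1"

definition palindromic :: "nat set \<Rightarrow> (nat set \<Rightarrow> real) \<Rightarrow> bool" where
  "palindromic V p \<longleftrightarrow> pos_dist V p \<and> (\<forall>a\<subseteq>V. p a = p (V - a))"

definition interaction :: "nat set \<Rightarrow> (nat set \<Rightarrow> real) \<Rightarrow> nat set \<Rightarrow> real" where
  "interaction V p b = (1 / 2 ^ card V) * (\<Sum>a\<in>Pow V. (-1) ^ card (a \<inter> b) * ln (p a))"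

definition ising :: "nat set \<Rightarrow> (nat set \<Rightarrow> real) \<Rightarrow> bool" where
  "ising V p \<longleftrightarrow> pos_dist V p \<and> (\<forall>b\<subseteq>V. card b \<ge> 3 \<longrightarrow> interaction V p b = 0)"

definition palindromic_ising :: "nat set \<Rightarrow> (nat set \<Rightarrow> real) \<Rightarrow> bool" where
  "palindromic_ising V p \<longleftrightarrow> ising V p \<and> palindromic V p"

definition marginal :: "nat set \<Rightarrow> nat set \<Rightarrow> (nat set \<Rightarrow> real) \<Rightarrow> nat set \<Rightarrow> real" where
  "marginal V M p c = (\<Sum>a\<in>{a\<in>Pow V. a \<inter> M = c}. p a)"

end

theory Submission
  imports Defs
begin

lemma marg_pos_dist:
  assumes "pos_dist V p" "finite V" "M \<subseteq> V"
  shows "pos_dist M (marginal V M p)"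
  unfolding pos_dist_def
proof (intro conjI allI impI)
  fix c assume c: "c \<subseteq> M"
  have fin: "finite {a\<in>Pow V. a \<inter> M = c}" using assms(2) by simp
  have cin: "c \<in> {a\<in>Pow V. a \<inter> M = c}" using c assms(3) by auto
  have "0 < p c" using assms(1) c assms(3) unfolding pos_dist_def by auto
  also have "p c \<le> (\<Sum>a\<in>{a\<in>Pow V. a \<inter> M = c}. p a)"
    by (rule member_le_sum[OF cin _ fin]) (use assms(1) in \<open>auto simp: pos_dist_def intro: less_imp_le\<close>)
  finally show "0 < marginal V M p c" unfolding marginal_def .
next
  have fM: "finite M" using assms finite_subset by blast
  have "(\<Sum>c\<in>Pow M. marginal V M p c) = (\<Sum>a\<in>Pow V. p a)"
    unfolding marginal_def
    by (rule sum.group) (use assms fM in auto)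
  then show "(\<Sum>c\<in>Pow M. marginal V M p c) = 1" using assms(1) unfolding pos_dist_def by simp
qed

lemma marg_pal:
  assumes "palindromic V p" "finite V" "M \<subseteq> V"
  shows "palindromic M (marginal V M p)"
  unfolding palindromic_def
proof (intro conjI allI impI)
  show "pos_dist M (marginal V M p)" proof (rule marg_pos_dist[OF _ assms(2,3)])
    show "pos_dist V p" using assms(1) unfolding palindromic_def by (rule conjunct1)
  qed
  fix c assume c: "c \<subseteq> M"
  have pal: "\<forall>a\<subseteq>V. p a = p (V - a)" using assms(1) unfolding palindromic_def by (rule conjunct2)
  have pe: "p (V - a) = p a" if "a \<subseteq> V" for a using pal[rule_format, OF that, symmetric] .
  show "marginal V M p c = marginal V M p (M - c)"
    unfolding marginal_def
  proof (rule sum.reindex_bij_witness[where i="\<lambda>a. V - a" and j="\<lambda>a. V - a"])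
    fix a assume a: "a \<in> {a \<in> Pow V. a \<inter> M = c}"
    hence aV: "a \<subseteq> V" and ac: "a \<inter> M = c" by auto
    show "V - (V - a) = a" using aV by (rule double_diff) (rule subset_refl)
    have "(V - a) \<inter> M = M - (a \<inter> M)" using assms(3) by blast
    hence "(V - a) \<inter> M = M - c" using ac by simp
    thus "V - a \<in> {a \<in> Pow V. a \<inter> M = M - c}" by simp
    show "p (V - a) = p a" using aV by (rule pe)
  next
    fix a assume a: "a \<in> {a \<in> Pow V. a \<inter> M = M - c}"
    hence aV: "a \<subseteq> V" and ac: "a \<inter> M = M - c" by auto
    show "V - (V - a) = a" using aV by (rule double_diff) (rule subset_refl)
    have "(V - a) \<inter> M = M - (a \<inter> M)" using assms(3) by blast
    also have "\<dots> = c" using ac c by blast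
    finally show "V - a \<in> {a \<in> Pow V. a \<inter> M = c}" by simp
  qed
qed

lemma odd_interaction:
  assumes "palindromic W q" "finite W" "b \<subseteq> W" "odd (card b)"
  shows "interaction W q b = 0"
proof -
  let ?S = "(\<Sum>a\<in>Pow W. (-1) ^ card (a \<inter> b) * ln (q a) :: real)"
  have pal: "\<forall>a\<subseteq>W. q a = q (W - a)" using assms(1) unfolding palindromic_def by (rule conjunct2)
  have pe: "q (W - a) = q a" if "a \<subseteq> W" for a using pal[rule_format, OF that, symmetric] .
  have fb: "finite b" using assms finite_subset by blast
  have key: "\<And>a. a \<subseteq> W \<Longrightarrow> (-1::real) ^ card ((W - a) \<inter> b) = - ((-1) ^ card (a \<inter> b))"
  proof -
    fix a assume a: "a \<subseteq> W"
    have "(W - a) \<inter> b = b - (a \<inter> b)" using assms(3) by auto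
    hence cc: "card ((W - a) \<inter> b) = card b - card (a \<inter> b)" using fb by (simp add: card_Diff_subset)
    have le: "card (a \<inter> b) \<le> card b" using fb by (simp add: card_mono)
    have "(-1::real) ^ card ((W - a) \<inter> b) * (-1) ^ card (a \<inter> b) = (-1) ^ card b"
      unfolding cc power_add[symmetric] using le by simp
    also have "\<dots> = -1" using assms(4) by simp
    finally have e: "(-1::real) ^ card ((W - a) \<inter> b) * (-1) ^ card (a \<inter> b) = -1" .
    have sq: "((-1::real) ^ card (a \<inter> b)) * (-1) ^ card (a \<inter> b) = 1"
      by (simp add: power_add[symmetric])
    from e sq show "(-1::real) ^ card ((W - a) \<inter> b) = - ((-1) ^ card (a \<inter> b))"
      by (metis minus_mult_left mult.assoc mult.right_neutral mult_minus1)
  qed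
  have "?S = (\<Sum>a\<in>Pow W. (-1) ^ card ((W - a) \<inter> b) * ln (q (W - a)))"
    by (rule sum.reindex_bij_witness[where i="\<lambda>a. W - a" and j="\<lambda>a. W - a"]) (auto simp: double_diff)
  also have "\<dots> = (\<Sum>a\<in>Pow W. - ((-1) ^ card (a \<inter> b) * ln (q a)))"
    by (rule sum.cong) (auto simp: key pe)
  also have "\<dots> = - ?S" by (simp add: sum_negf)
  finally have "?S = 0" by simp
  thus ?thesis unfolding interaction_def by simp
qed

theorem proposition5p2:
  fixes d :: nat and p :: "nat set \<Rightarrow> real" and M :: "nat set"
  assumes "d \<le> 4"
    and "palindromic_ising {1..d} p"
    and "M \<subseteq> {1..d}" and "M \<noteq> {}"
  shows "palindromic_ising M (marginal {1..d} M p)"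
proof -
  let ?V = "{1..d}"
  have pal: "palindromic ?V p" and isg: "ising ?V p" using assms(2) unfolding palindromic_ising_def by auto
  have mp: "palindromic M (marginal ?V M p)" using marg_pal[OF pal _ assms(3)] by simp
  have fM: "finite M" using assms(3) finite_subset by blast
  have "\<forall>b\<subseteq>M. card b \<ge> 3 \<longrightarrow> interaction M (marginal ?V M p) b = 0"
  proof (intro allI impI)
    fix b assume b: "b \<subseteq> M" "3 \<le> card b"
    have "card b \<le> card ?V" by (rule card_mono) (use b assms(3) in auto)
    hence c4: "card b \<le> 4" using assms(1) by simp
    show "interaction M (marginal ?V M p) b = 0"
    proof (cases "odd (card b)")
      case True thus ?thesis using odd_interaction[OF mp fM b(1)] by simp
    next
      case False
      have "card b \<le> d" using \<open>card b \<le> card ?V\<close> by simp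
      moreover have "card b = 4"
      proof -
        obtain n where n: "n = card b" by simp
        have "3 \<le> n" "n \<le> 4" "even n" using n False b(2) c4 by auto
        hence "n = 4" by presburger
        thus ?thesis using n by simp
      qed
      ultimately have cb: "card b = card ?V" using assms(1) by simp
      have bV: "b \<subseteq> ?V" using b(1) assms(3) by (rule subset_trans)
      have "b = ?V" by (rule card_subset_eq[OF finite_atLeastAtMost bV cb])
      hence MV: "M = ?V" "b = ?V" using b(1) assms(3) by blast+
      have eq: "\<And>a. a \<in> Pow ?V \<Longrightarrow> marginal ?V ?V p a = p a"
      proof -
        fix a assume a: "a \<in> Pow ?V"
        have "{a'\<in>Pow ?V. a' \<inter> ?V = a} = {a}" using a by blast
        thus "marginal ?V ?V p a = p a" unfolding marginal_def by simp
      qed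
      have "(\<Sum>a\<in>Pow ?V. (-1) ^ card (a \<inter> ?V) * ln (marginal ?V ?V p a))
            = (\<Sum>a\<in>Pow ?V. (-1) ^ card (a \<inter> ?V) * ln (p a) :: real)"
        by (rule sum.cong[OF refl]) (simp only: eq)
      hence "interaction ?V (marginal ?V ?V p) ?V = interaction ?V p ?V"
        unfolding interaction_def by (simp only:)
      also have "\<dots> = 0"
      proof -
        have all: "\<forall>b'\<subseteq>?V. card b' \<ge> 3 \<longrightarrow> interaction ?V p b' = 0" using isg unfolding ising_def by (rule conjunct2)
        have c3: "3 \<le> card ?V" using b(2) unfolding MV(2) .
        show ?thesis using all[rule_format, OF subset_refl c3] .
      qed
      finally show ?thesis unfolding MV .
    qed
  qed
  moreover have "pos_dist M (marginal ?V M p)" using mp unfolding palindromic_def by simp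
  ultimately show ?thesis using mp unfolding palindromic_ising_def ising_def by simp
qed

end
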